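(* Let $(x_i)_{i\in\mathbf Z}$ be an admissible frontier, embedded in the plane as the lattice path $(P_i)_{i\in\mathbf Z}$. Then there exists a unique $SL_2$-tiling $t:\mathbf Z^2\to\mathbf N$ extending the embedding, i.e. with $t(P_i)=1$ for all $i$. Moreover, for every point $M$ below the frontier, if the word of $M$ is $x_1x_2\cdots x_{n+1}$ (with $n\ge1$, $x_i\in\{x,y\}$), then $$t(M)=(1,1)\,M(x_2)M(x_3)\cdots M(x_n)\begin{pmatrix}1\\1\end{pmatrix},$$ where $M(x)=\begin{pmatrix}1&1\\0&1\end{pmatrix}$, $M(y)=\begin{pmatrix}1&0\\1&1\end{pmatrix}$ (empty product $=$ identity).
   Context: Use Cartesian coordinates on $\mathbf Z^2$ (first coordinate to the right, second upward). An $SL_2$-tiling with values in a commutative ring (or semiring inside a ring) $R$ is a map $t:\mathbf Z^2\to R$ such that for all $(a,b)\in\mathbf Z^2$: $t(a,b+1)\,t(a+1,b)-t(a,b)\,t(a+1,b+1)=1$ (every connected $2\times2$ block, read as displayed in the plane, has determinant $1$). A frontier is a bi-infinite word $(x_i)_{i\in\mathbf Z}$ over $\{x,y\}$; it is admissible if neither $(x_n)_{n\ge0}$ nor $(x_n)_{n\le0}$ is ultimately constant. It is embedded (up to translation) as lattice points $P_i$, $i\in\mathbf Z$, with $P_i-P_{i-1}=(1,0)$ if $x_i=x$ and $(0,1)$ if $x_i=y$. A point $M=(u,v)$ not on the path is below the frontier if some path point $(u,v')$ has $v'>v$. For such $M$, let $L=P_r$ be the path point in row $v$ with largest first coordinate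 ($<u$), and $U=P_s$ the path point in column $u$ with smallest second coordinate ($>v$); then $r<s$ and the word of $M$ is $x_{r+1}x_{r+2}\cdots x_s$ (it begins with $y$ and ends with $x$). *)

theory Defs
  imports "HOL-Analysis.Analysis"
begin

datatype letter = X | Y

definition sl2_tiling :: "(int \<times> int \<Rightarrow> nat) \<Rightarrow> bool" where
  "sl2_tiling t \<longleftrightarrow>
     (\<forall>a b. int (t (a, b+1)) * int (t (a+1, b)) - int (t (a, b)) * int (t (a+1, b+1)) = 1)"

definition admissible :: "(int \<Rightarrow> letter) \<Rightarrow> bool" where
  "admissible w \<longleftrightarrow>
     \<not> (\<exists>N c. \<forall>n\<ge>N. w n = c) \<and> \<not> (\<exists>N c. \<forall>n\<le>N. w n = c)"

definition step :: "letter \<Rightarrow> int \<times> int" where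
  "step l = (if l = X then (1, 0) else (0, 1))"

definition embedding :: "(int \<Rightarrow> letter) \<Rightarrow> (int \<Rightarrow> int \<times> int) \<Rightarrow> bool" where
  "embedding w P \<longleftrightarrow> (\<forall>i. P i = P (i - 1) + step (w i))"

definition letter_mat :: "letter \<Rightarrow> int ^ 2 ^ 2" where
  "letter_mat l = (if l = X
     then (\<chi> i j. if i = 2 \<and> j = 1 then 0 else 1)
     else (\<chi> i j. if i = 1 \<and> j = 2 then 0 else 1))"

definition word_value :: "letter list \<Rightarrow> int" where
  "word_value ls =
     (((\<chi> i j. 1) :: int ^ 2 ^ 1) ** foldr (\<lambda>l A. letter_mat l ** A) ls (mat 1)
        ** ((\<chi> i j. 1) :: int ^ 1 ^ 2)) $ 1 $ 1"

end

theory Submission imports Defs begin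

definition det2 :: "int \<times> int \<Rightarrow> int \<times> int \<Rightarrow> int" where
  "det2 p q = fst p * snd q - snd p * fst q"

lemma det2_add1[simp]: "det2 (p + q) r = det2 p r + det2 q r"
  by (simp add: det2_def algebra_simps)
lemma det2_add2[simp]: "det2 r (p + q) = det2 r p + det2 r q"
  by (simp add: det2_def algebra_simps)
lemma det2_self[simp]: "det2 p p = 0"
  by (simp add: det2_def)
lemma det2_anti: "det2 p q = - det2 q p"
  by (simp add: det2_def)

type_synonym state = "(int \<times> int) \<times> (int \<times> int)"

fun stp :: "letter \<Rightarrow> state \<Rightarrow> state" where
  "stp X (A, B) = (A + B, B)"
| "stp Y (A, B) = (A, A + B)"

fun unstp :: "letter \<Rightarrow> state \<Rightarrow> state" where
  "unstp X (A, B) = (A - B, B)"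
| "unstp Y (A, B) = (A, B - A)"

lemma stp_unstp: "stp l (unstp l S) = S"
  by (cases l; cases S) auto

lemma det_stp: "det2 (fst (stp l S)) (snd (stp l S)) = det2 (fst S) (snd S)"
  by (cases l; cases S) auto

primrec Sf :: "(int \<Rightarrow> letter) \<Rightarrow> nat \<Rightarrow> state" where
  "Sf w 0 = ((1, 0), (0, 1))"
| "Sf w (Suc n) = stp (w (int n + 1)) (Sf w n)"

primrec Sb :: "(int \<Rightarrow> letter) \<Rightarrow> nat \<Rightarrow> state" where
  "Sb w 0 = ((1, 0), (0, 1))"
| "Sb w (Suc n) = unstp (w (- int n)) (Sb w n)"

definition St :: "(int \<Rightarrow> letter) \<Rightarrow> int \<Rightarrow> state" where
  "St w i = (if i \<ge> 0 then Sf w (nat i) else Sb w (nat (- i)))"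

lemma St_step: "St w i = stp (w i) (St w (i - 1))"
proof (cases "i \<ge> 1")
  case True
  then have "nat i = Suc (nat (i - 1))" by simp
  then show ?thesis using True by (simp add: St_def)
next
  case False
  then have "nat (- (i - 1)) = Suc (nat (- i))" by simp
  then have "St w (i - 1) = unstp (w i) (St w i)" using False by (simp add: St_def)
  then show ?thesis by (simp add: stp_unstp)
qed

lemma St_det: "det2 (fst (St w i)) (snd (St w i)) = 1"
proof (induction i rule: int_induct[where k = 0])
  case base
  then show ?case by (simp add: St_def det2_def)
next
  case (step1 i)
  then show ?case using St_step[of w "i+1"] det_stp by simp
next
  case (step2 i)
  then show ?case using St_step[of w i] det_stp by metis
qed

fun run :: "letter list \<Rightarrow> state \<Rightarrow> state" where
  "run [] S = S"
| "run (l # ls) S = run ls (stp l S)"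

lemma run_app1: "run (ls @ [l]) S = stp l (run ls S)"
  by (induction ls arbitrary: S) auto

lemma St_run: "r \<le> s \<Longrightarrow> St w s = run (map w [r+1..s]) (St w r)"
proof (induction s rule: int_ge_induct)
  case base
  then show ?case by simp
next
  case (step s)
  have "[r+1..s+1] = [r+1..s] @ [s+1]" using step upto_rec2[of "r+1" "s+1"] by simp
  then show ?case using step St_step[of w "s+1"] by (simp add: run_app1)
qed

fun fstep :: "letter \<Rightarrow> int \<times> int \<Rightarrow> int \<times> int" where
  "fstep X (p, q) = (p, p + q)"
| "fstep Y (p, q) = (p + q, q)"

fun cstep :: "letter \<Rightarrow> int \<times> int \<Rightarrow> int \<times> int" where
  "cstep X (p, q) = (p + q, q)"
| "cstep Y (p, q) = (p, p + q)"

definition cf :: "letter list \<Rightarrow> int \<times> int" where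
  "cf ls = foldr cstep ls (1, 1)"

lemma run_det: "det2 (fst (run ls (A, B))) C
   = fst (foldr fstep ls (1,0)) * det2 A C + snd (foldr fstep ls (1,0)) * det2 B C"
proof (induction ls arbitrary: A B)
  case Nil
  then show ?case by simp
next
  case (Cons l ls)
  obtain p q where pq: "foldr fstep ls (1,0) = (p, q)" by force
  show ?case using Cons[of "fst (stp l (A,B))" "snd (stp l (A,B))"] pq
    by (cases l) (auto simp: algebra_simps)
qed

lemma fstep_cstep: "foldr fstep ls (1,1) = prod.swap (cf ls)"
proof (induction ls)
  case Nil
  then show ?case by (simp add: cf_def)
next
  case (Cons l ls)
  obtain p q where pq: "cf ls = (p, q)" by force
  then show ?case using Cons by (cases l) (auto simp: cf_def)
qed

lemma wv_col: "foldr (\<lambda>l A. letter_mat l ** A) ls (mat 1) ** ((\<chi> i j. 1) :: int ^ 1 ^ 2)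
   = (\<chi> i j. if i = 1 then fst (cf ls) else snd (cf ls))"
proof (induction ls)
  case Nil
  show ?case by (simp add: cf_def vec_eq_iff)
next
  case (Cons l ls)
  obtain p q where pq: "cf ls = (p, q)" by force
  have "foldr (\<lambda>l A. letter_mat l ** A) (l # ls) (mat 1) ** ((\<chi> i j. 1) :: int ^ 1 ^ 2)
    = letter_mat l ** (foldr (\<lambda>l A. letter_mat l ** A) ls (mat 1) ** ((\<chi> i j. 1) :: int ^ 1 ^ 2))"
    by (simp add: matrix_mul_assoc)
  also have "\<dots> = letter_mat l ** (\<chi> i j. if i = 1 then p else q)" using Cons.IH pq by (simp only: prod.sel)
  also have "\<dots> = (\<chi> i j. if i = 1 then fst (cf (l # ls)) else snd (cf (l # ls)))"
    using pq by (cases l) (auto simp: cf_def vec_eq_iff matrix_matrix_mult_def sum_2 forall_2 letter_mat_def)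
  finally show ?case .
qed

lemma word_value_cf: "word_value ls = fst (cf ls) + snd (cf ls)"
  unfolding word_value_def matrix_mul_assoc[symmetric] wv_col
  by (simp add: matrix_matrix_mult_def sum_2)

lemma al_word: "fst (foldr fstep (Y # m @ [X]) (1,0)) = fst (cf m) + snd (cf m)"
proof -
  have "foldr fstep (Y # m @ [X]) (1,0) = fstep Y (foldr fstep m (1,1))" by simp
  then show ?thesis using fstep_cstep[of m] by (cases "cf m") simp
qed


lemma coord_mono:
  fixes f :: "int \<Rightarrow> int" and w :: "int \<Rightarrow> letter"
  assumes inc: "\<And>i. f i = f (i - 1) + (if w i = l then 1 else (0::int))" and "i \<le> j"
  shows "f i \<le> f j"
  using assms(2)
proof (induction j rule: int_ge_induct)
  case base then show ?case by simp
next
  case (step j) then show ?case using inc[of "j+1"] by simp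
qed

lemma coord_cross:
  fixes f :: "int \<Rightarrow> int" and w :: "int \<Rightarrow> letter"
  assumes inc: "\<And>i. f i = f (i - 1) + (if w i = l then 1 else (0::int))" and "i \<le> j"
  shows "f i \<le> u \<Longrightarrow> u < f j \<Longrightarrow> \<exists>k. f (k - 1) = u \<and> f k = u + 1 \<and> w k = l"
  using assms(2)
proof (induction j rule: int_ge_induct)
  case base then show ?case by simp
next
  case (step j)
  show ?case
  proof (cases "u < f j")
    case True then show ?thesis using step by simp
  next
    case False
    then show ?thesis using step(4) inc[of "j+1"]
      by (intro exI[of _ "j+1"]) (auto split: if_splits)
  qed
qed

lemma coord_up:
  fixes f :: "int \<Rightarrow> int" and w :: "int \<Rightarrow> letter"
  assumes inc: "\<And>i. f i = f (i - 1) + (if w i = l then 1 else (0::int))"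
    and up: "\<And>N. \<exists>n\<ge>N. w n = l"
  shows "\<exists>j\<ge>N. f j \<ge> f N + int k"
proof (induction k)
  case 0 then show ?case by (intro exI[of _ N]) simp
next
  case (Suc k)
  then obtain j where j: "j \<ge> N" "f j \<ge> f N + int k" by auto
  obtain n where n: "n \<ge> j + 1" "w n = l" using up by blast
  have "f (n - 1) \<ge> f j" using coord_mono[of f w l, OF inc] n by simp
  then show ?case using inc[of n] n j by (intro exI[of _ n]) auto
qed

lemma coord_down:
  fixes f :: "int \<Rightarrow> int" and w :: "int \<Rightarrow> letter"
  assumes inc: "\<And>i. f i = f (i - 1) + (if w i = l then 1 else (0::int))"
    and down: "\<And>N. \<exists>n\<le>N. w n = l"
  shows "\<exists>j\<le>N. f j \<le> f N - int k"
proof (induction k)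
  case 0 then show ?case by (intro exI[of _ N]) simp
next
  case (Suc k)
  then obtain j where j: "j \<le> N" "f j \<le> f N - int k" by auto
  obtain n where n: "n \<le> j" "w n = l" using down by blast
  have "f n \<le> f j" using coord_mono[of f w l, OF inc] n by simp
  then show ?case using inc[of n] n j by (intro exI[of _ "n - 1"]) auto
qed

lemma coord_surj:
  fixes f :: "int \<Rightarrow> int" and w :: "int \<Rightarrow> letter"
  assumes inc: "\<And>i. f i = f (i - 1) + (if w i = l then 1 else (0::int))"
    and up: "\<And>N. \<exists>n\<ge>N. w n = l" and down: "\<And>N. \<exists>n\<le>N. w n = l"
  shows "\<exists>i. f i = u"
proof (cases "u \<ge> f 0")
  case True
  obtain j where j: "j \<ge> 0" "f j \<ge> f 0 + int (nat (u - f 0 + 1))"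
    using coord_up[of f w l, OF inc up] by blast
  obtain k where "f (k - 1) = u" using coord_cross[of f w l, OF inc j(1), of u] True j by auto
  then show ?thesis by blast
next
  case False
  obtain j where j: "j \<le> 0" "f j \<le> f 0 - int (nat (f 0 - u + 1))"
    using coord_down[of f w l, OF inc down] by blast
  obtain k where "f (k - 1) = u - 1 \<and> f k = u"
    using coord_cross[of f w l, OF inc j(1), of "u - 1"] False j by force
  then show ?thesis by blast
qed


lemma not_X[simp]: "l \<noteq> X \<longleftrightarrow> l = Y" by (cases l) auto
lemma not_Y[simp]: "l \<noteq> Y \<longleftrightarrow> l = X" by (cases l) auto

lemma St_pos:
  "r \<le> s \<Longrightarrow> det2 (fst (St w s)) (snd (St w r)) \<ge> 1 \<and> det2 (fst (St w r)) (fst (St w s)) \<ge> 0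
     \<and> det2 (snd (St w s)) (snd (St w r)) \<ge> 0 \<and> det2 (fst (St w r)) (snd (St w s)) \<ge> 1"
proof (induction s rule: int_ge_induct)
  case base
  then show ?case using St_det[of w r] by simp
next
  case (step s)
  obtain A B where AB: "St w s = (A, B)" by (metis surj_pair)
  have e: "St w (s+1) = stp (w (s+1)) (A, B)" using St_step[of w "s+1"] AB by simp
  show ?case using step(2) AB e by (cases "w (s+1)") auto
qed

lemma plucker: "det2 p s * det2 q r - det2 p r * det2 q s = det2 p q * det2 s r"
  by (simp add: det2_def algebra_simps)

lemma tiling_pos:
  assumes "sl2_tiling t" shows "t (x, y) > 0"
proof (rule ccontr)
  assume "\<not> t (x, y) > 0"
  then have z: "t (x, y) = 0" by simp
  have "int (t (x, y)) * int (t (x+1, y-1)) - int (t (x, y-1)) * int (t (x+1, y)) = 1"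
    using assms unfolding sl2_tiling_def by (metis diff_add_cancel)
  then have "- (int (t (x, y-1)) * int (t (x+1, y))) = 1" using z by simp
  moreover have "int (t (x, y-1)) * int (t (x+1, y)) \<ge> 0" by simp
  ultimately show False by linarith
qed

lemma agree_below:
  assumes t1: "sl2_tiling t1" and t2: "sl2_tiling t2"
    and e: "t1 (u-1, v) = t2 (u-1, v)" "t1 (u, v+1) = t2 (u, v+1)" "t1 (u-1, v+1) = t2 (u-1, v+1)"
  shows "t1 (u, v) = t2 (u, v)"
proof -
  have h1: "int (t1 (u-1, v+1)) * int (t1 (u, v)) - int (t1 (u-1, v)) * int (t1 (u, v+1)) = 1"
    using t1 unfolding sl2_tiling_def by (metis diff_add_cancel)
  have h2: "int (t2 (u-1, v+1)) * int (t2 (u, v)) - int (t2 (u-1, v)) * int (t2 (u, v+1)) = 1"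
    using t2 unfolding sl2_tiling_def by (metis diff_add_cancel)
  have "int (t1 (u-1, v+1)) * int (t1 (u, v)) = int (t1 (u-1, v+1)) * int (t2 (u, v))"
    using h1 h2 unfolding e by linarith
  moreover have "t1 (u-1, v+1) > 0" using tiling_pos[OF t1] .
  ultimately show ?thesis by simp
qed

lemma agree_above:
  assumes t1: "sl2_tiling t1" and t2: "sl2_tiling t2"
    and e: "t1 (u, v-1) = t2 (u, v-1)" "t1 (u+1, v) = t2 (u+1, v)" "t1 (u+1, v-1) = t2 (u+1, v-1)"
  shows "t1 (u, v) = t2 (u, v)"
proof -
  have h1: "int (t1 (u, v)) * int (t1 (u+1, v-1)) - int (t1 (u, v-1)) * int (t1 (u+1, v)) = 1"
    using t1 unfolding sl2_tiling_def by (metis diff_add_cancel)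
  have h2: "int (t2 (u, v)) * int (t2 (u+1, v-1)) - int (t2 (u, v-1)) * int (t2 (u+1, v)) = 1"
    using t2 unfolding sl2_tiling_def by (metis diff_add_cancel)
  have "int (t1 (u, v)) * int (t1 (u+1, v-1)) = int (t2 (u, v)) * int (t1 (u+1, v-1))"
    using h1 h2 unfolding e by linarith
  moreover have "t1 (u+1, v-1) > 0" using tiling_pos[OF t1] .
  ultimately show ?thesis by simp
qed


definition col :: "(int \<Rightarrow> letter) \<Rightarrow> (int \<Rightarrow> int \<times> int) \<Rightarrow> int \<Rightarrow> int \<times> int" where
  "col w P u = fst (St w (SOME i. fst (P i) = u))"
definition rw :: "(int \<Rightarrow> letter) \<Rightarrow> (int \<Rightarrow> int \<times> int) \<Rightarrow> int \<Rightarrow> int \<times> int" where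
  "rw w P v = snd (St w (SOME i. snd (P i) = v))"
definition T0 :: "(int \<Rightarrow> letter) \<Rightarrow> (int \<Rightarrow> int \<times> int) \<Rightarrow> int \<times> int \<Rightarrow> nat" where
  "T0 w P p = nat (det2 (col w P (fst p)) (rw w P (snd p)))"

context
  fixes w :: "int \<Rightarrow> letter" and P :: "int \<Rightarrow> int \<times> int"
  assumes adm: "admissible w" and emb: "embedding w P"
begin

lemma up: "\<exists>n\<ge>N. w n = l"
proof (rule ccontr)
  assume "\<not> ?thesis"
  then have "\<forall>n\<ge>N. w n = (if l = X then Y else X)" by (cases l) auto
  then show False using adm unfolding admissible_def by blast
qed

lemma down: "\<exists>n\<le>N. w n = l"
proof (rule ccontr)
  assume "\<not> ?thesis"
  then have "\<forall>n\<le>N. w n = (if l = X then Y else X)" by (cases l) auto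
  then show False using adm unfolding admissible_def by blast
qed

lemma P_step: "P i = P (i - 1) + step (w i)"
  using emb unfolding embedding_def by blast

lemma a_inc: "fst (P i) = fst (P (i - 1)) + (if w i = X then 1 else 0)"
  using P_step[of i] by (cases "w i") (auto simp: step_def)

lemma b_inc: "snd (P i) = snd (P (i - 1)) + (if w i = Y then 1 else 0)"
  using P_step[of i] by (cases "w i") (auto simp: step_def)

lemma a_mono: "i \<le> j \<Longrightarrow> fst (P i) \<le> fst (P j)"
  using coord_mono[of "\<lambda>i. fst (P i)" w X, OF a_inc] by blast
lemma b_mono: "i \<le> j \<Longrightarrow> snd (P i) \<le> snd (P j)"
  using coord_mono[of "\<lambda>i. snd (P i)" w Y, OF b_inc] by blast
lemma a_surj: "\<exists>i. fst (P i) = u"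
  using coord_surj[of "\<lambda>i. fst (P i)" w X, OF a_inc up down] by blast
lemma b_surj: "\<exists>i. snd (P i) = u"
  using coord_surj[of "\<lambda>i. snd (P i)" w Y, OF b_inc up down] by blast

lemma A_const: "i \<le> j \<Longrightarrow> fst (P i) = fst (P j) \<Longrightarrow> fst (St w i) = fst (St w j)"
proof (induction j rule: int_ge_induct)
  case base then show ?case by simp
next
  case (step j)
  have "fst (P i) \<le> fst (P j)" "fst (P j) \<le> fst (P (j+1))" using a_mono step(1) by auto
  then have "fst (P j) = fst (P i)" "w (j+1) = Y" using step(3) a_inc[of "j+1"]
    by (auto split: if_splits)
  then show ?case using step St_step[of w "j+1"] by (cases "St w j") auto
qed

lemma B_const: "i \<le> j \<Longrightarrow> snd (P i) = snd (P j) \<Longrightarrow> snd (St w i) = snd (St w j)"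
proof (induction j rule: int_ge_induct)
  case base then show ?case by simp
next
  case (step j)
  have "snd (P i) \<le> snd (P j)" "snd (P j) \<le> snd (P (j+1))" using b_mono step(1) by auto
  then have "snd (P j) = snd (P i)" "w (j+1) = X" using step(3) b_inc[of "j+1"]
    by (auto split: if_splits)
  then show ?case using step St_step[of w "j+1"] by (cases "St w j") auto
qed

lemma col_eq: "fst (P i) = u \<Longrightarrow> col w P u = fst (St w i)"
proof -
  assume h: "fst (P i) = u"
  define j where "j = (SOME i. fst (P i) = u)"
  have j: "fst (P j) = u" unfolding j_def using h by (rule someI)
  have e: "fst (P i) = fst (P j)" using h j by simp
  have "fst (St w j) = fst (St w i)"
  proof (cases "i \<le> j")
    case True then show ?thesis using A_const[OF True e] by simp
  next
    case False then show ?thesis using A_const[of j i] e by simp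
  qed
  then show ?thesis unfolding col_def j_def[symmetric] .
qed

lemma row_eq: "snd (P i) = v \<Longrightarrow> rw w P v = snd (St w i)"
proof -
  assume h: "snd (P i) = v"
  define j where "j = (SOME i. snd (P i) = v)"
  have j: "snd (P j) = v" unfolding j_def using h by (rule someI)
  have e: "snd (P i) = snd (P j)" using h j by simp
  have "snd (St w j) = snd (St w i)"
  proof (cases "i \<le> j")
    case True then show ?thesis using B_const[OF True e] by simp
  next
    case False then show ?thesis using B_const[of j i] e by simp
  qed
  then show ?thesis unfolding rw_def j_def[symmetric] .
qed

lemma col_consec: "det2 (col w P u) (col w P (u+1)) = 1"
proof -
  obtain i where i: "fst (P i) = u" using a_surj by blast
  obtain j where j: "fst (P j) = u + 1" using a_surj by blast
  have "i \<le> j" using a_mono[of j i] i j by linarith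
  then obtain k where k: "fst (P (k-1)) = u" "fst (P k) = u + 1" "w k = X"
    using coord_cross[of "\<lambda>i. fst (P i)" w X, OF a_inc, of i j u] i j by auto
  have "col w P u = fst (St w (k-1))" "col w P (u+1) = fst (St w k)"
    using col_eq[of "k-1" u] col_eq[of k "u+1"] k by auto
  then show ?thesis using St_step[of w k] k(3) St_det[of w "k-1"]
    by (cases "St w (k-1)") auto
qed

lemma row_consec: "det2 (rw w P (v+1)) (rw w P v) = 1"
proof -
  obtain i where i: "snd (P i) = v" using b_surj by blast
  obtain j where j: "snd (P j) = v + 1" using b_surj by blast
  have "i \<le> j" using b_mono[of j i] i j by linarith
  then obtain k where k: "snd (P (k-1)) = v" "snd (P k) = v + 1" "w k = Y"
    using coord_cross[of "\<lambda>i. snd (P i)" w Y, OF b_inc, of i j v] i j by auto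
  have "rw w P v = snd (St w (k-1))" "rw w P (v+1) = snd (St w k)"
    using row_eq[of "k-1" v] row_eq[of k "v+1"] k by auto
  then show ?thesis using St_step[of w k] k(3) St_det[of w "k-1"]
    by (cases "St w (k-1)") auto
qed

lemma det_pos: "det2 (col w P u) (rw w P v) \<ge> 1"
proof -
  obtain i where i: "fst (P i) = u" using a_surj by blast
  obtain j where j: "snd (P j) = v" using b_surj by blast
  have c: "col w P u = fst (St w i)" "rw w P v = snd (St w j)" using col_eq row_eq i j by auto
  show ?thesis
  proof (cases "j \<le> i")
    case True then show ?thesis using St_pos[of j i w] c by simp
  next
    case False then show ?thesis using St_pos[of i j w] c by simp
  qed
qed

lemma T0_int: "int (T0 w P (u, v)) = det2 (col w P u) (rw w P v)"
  using det_pos[of u v] by (simp add: T0_def)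

lemma T0_tiling: "sl2_tiling (T0 w P)"
  unfolding sl2_tiling_def T0_int
  using plucker[of "col w P a" "rw w P (b+1)" "col w P (a+1)" "rw w P b" for a b]
    col_consec row_consec by simp

lemma T0_path: "T0 w P (P i) = 1"
proof -
  have "T0 w P (P i) = nat (det2 (fst (St w i)) (snd (St w i)))"
    unfolding T0_def using col_eq[of i] row_eq[of i] by simp
  then show ?thesis using St_det by simp
qed


lemma below_agree:
  assumes t1: "sl2_tiling t1" and t2: "sl2_tiling t2"
    and p1: "\<forall>i. t1 (P i) = 1" and p2: "\<forall>i. t2 (P i) = 1"
  shows "r \<le> s \<Longrightarrow> t1 (fst (P s), snd (P r)) = t2 (fst (P s), snd (P r))"
proof (induction "nat (s - r)" arbitrary: r s rule: less_induct)
  case less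
  show ?case
  proof (cases "s = r")
    case True
    then have "(fst (P s), snd (P r)) = P r" by simp
    then show ?thesis using p1 p2 by metis
  next
    case False
    with less.prems have rs: "r < s" by simp
    show ?thesis
    proof (cases "w (r+1)")
      case X
      then have "snd (P (r+1)) = snd (P r)" using b_inc[of "r+1"] by simp
      moreover have "t1 (fst (P s), snd (P (r+1))) = t2 (fst (P s), snd (P (r+1)))"
        using less.hyps[of s "r+1"] rs by simp
      ultimately show ?thesis by simp
    next
      case Y
      show ?thesis
      proof (cases "w s")
        case Y
        then have "fst (P (s-1)) = fst (P s)" using a_inc[of s] by simp
        moreover have "t1 (fst (P (s-1)), snd (P r)) = t2 (fst (P (s-1)), snd (P r))"
          using less.hyps[of "s-1" r] rs by simp
        ultimately show ?thesis by simp
      next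
        case X
        have "s \<noteq> r + 1" using X \<open>w (r+1) = Y\<close> by auto
        then have rs2: "r + 1 \<le> s - 1" using rs by simp
        have u: "fst (P (s-1)) = fst (P s) - 1" using a_inc[of s] X by simp
        have v: "snd (P (r+1)) = snd (P r) + 1" using b_inc[of "r+1"] \<open>w (r+1) = Y\<close> by simp
        have e1: "t1 (fst (P (s-1)), snd (P r)) = t2 (fst (P (s-1)), snd (P r))"
          using less.hyps[of "s-1" r] rs2 by simp
        have e2: "t1 (fst (P s), snd (P (r+1))) = t2 (fst (P s), snd (P (r+1)))"
          using less.hyps[of s "r+1"] rs2 by simp
        have e3: "t1 (fst (P (s-1)), snd (P (r+1))) = t2 (fst (P (s-1)), snd (P (r+1)))"
          using less.hyps[of "s-1" "r+1"] rs2 by simp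
        show ?thesis using agree_below[OF t1 t2, of "fst (P s)" "snd (P r)"] e1 e2 e3 u v by simp
      qed
    qed
  qed
qed

lemma above_agree:
  assumes t1: "sl2_tiling t1" and t2: "sl2_tiling t2"
    and p1: "\<forall>i. t1 (P i) = 1" and p2: "\<forall>i. t2 (P i) = 1"
  shows "r \<le> s \<Longrightarrow> t1 (fst (P r), snd (P s)) = t2 (fst (P r), snd (P s))"
proof (induction "nat (s - r)" arbitrary: r s rule: less_induct)
  case less
  show ?case
  proof (cases "s = r")
    case True
    then have "(fst (P r), snd (P s)) = P r" by simp
    then show ?thesis using p1 p2 by metis
  next
    case False
    with less.prems have rs: "r < s" by simp
    show ?thesis
    proof (cases "w (r+1)")
      case Y
      then have "fst (P (r+1)) = fst (P r)" using a_inc[of "r+1"] by simp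
      moreover have "t1 (fst (P (r+1)), snd (P s)) = t2 (fst (P (r+1)), snd (P s))"
        using less.hyps[of s "r+1"] rs by simp
      ultimately show ?thesis by simp
    next
      case X
      show ?thesis
      proof (cases "w s")
        case X
        then have "snd (P (s-1)) = snd (P s)" using b_inc[of s] by simp
        moreover have "t1 (fst (P r), snd (P (s-1))) = t2 (fst (P r), snd (P (s-1)))"
          using less.hyps[of "s-1" r] rs by simp
        ultimately show ?thesis by simp
      next
        case Y
        have "s \<noteq> r + 1" using Y \<open>w (r+1) = X\<close> by auto
        then have rs2: "r + 1 \<le> s - 1" using rs by simp
        have v: "snd (P (s-1)) = snd (P s) - 1" using b_inc[of s] Y by simp
        have u: "fst (P (r+1)) = fst (P r) + 1" using a_inc[of "r+1"] \<open>w (r+1) = X\<close> by simp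
        have e1: "t1 (fst (P r), snd (P (s-1))) = t2 (fst (P r), snd (P (s-1)))"
          using less.hyps[of "s-1" r] rs2 by simp
        have e2: "t1 (fst (P (r+1)), snd (P s)) = t2 (fst (P (r+1)), snd (P s))"
          using less.hyps[of s "r+1"] rs2 by simp
        have e3: "t1 (fst (P (r+1)), snd (P (s-1))) = t2 (fst (P (r+1)), snd (P (s-1)))"
          using less.hyps[of "s-1" "r+1"] rs2 by simp
        show ?thesis using agree_above[OF t1 t2, of "fst (P r)" "snd (P s)"] e1 e2 e3 u v by simp
      qed
    qed
  qed
qed

lemma uniq:
  assumes t1: "sl2_tiling t1" and t2: "sl2_tiling t2"
    and p1: "\<forall>i. t1 (P i) = 1" and p2: "\<forall>i. t2 (P i) = 1"
  shows "t1 = t2"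
proof
  fix p :: "int \<times> int"
  obtain u v where p: "p = (u, v)" by force
  obtain i where i: "fst (P i) = u" using a_surj by blast
  obtain j where j: "snd (P j) = v" using b_surj by blast
  show "t1 p = t2 p"
  proof (cases "j \<le> i")
    case True then show ?thesis using below_agree[OF assms True] i j p by simp
  next
    case False then show ?thesis using above_agree[OF assms, of i j] i j p by simp
  qed
qed

lemma formula:
  assumes h1: "\<forall>i. P i \<noteq> (u, v)" and h2: "snd (P r) = v" and h3: "fst (P r) < u"
    and h4: "\<forall>i. snd (P i) = v \<and> fst (P i) < u \<longrightarrow> fst (P i) \<le> fst (P r)"
    and h5: "fst (P s) = u" and h6: "snd (P s) > v"
    and h7: "\<forall>i. fst (P i) = u \<and> snd (P i) > v \<longrightarrow> snd (P s) \<le> snd (P i)"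
  shows "int (T0 w P (u, v)) = word_value (map w [r + 2..s - 1])"
proof -
  have rs: "r < s"
  proof (rule ccontr)
    assume "\<not> r < s"
    then have "fst (P s) \<le> fst (P r)" using a_mono[of s r] by simp
    then show False using h3 h5 by simp
  qed
  have wr: "w (r+1) = Y"
  proof (rule ccontr)
    assume "w (r+1) \<noteq> Y" then have X: "w (r+1) = X" by simp
    have a1: "fst (P (r+1)) = fst (P r) + 1" using a_inc[of "r+1"] X by simp
    have b1: "snd (P (r+1)) = v" using b_inc[of "r+1"] X h2 by simp
    have "fst (P (r+1)) \<le> u" using a_mono[of "r+1" s] rs h5 by simp
    moreover have "fst (P (r+1)) \<noteq> u" using h1 b1 by (metis prod.collapse)
    ultimately have "fst (P (r+1)) < u" by simp
    then have "fst (P (r+1)) \<le> fst (P r)" using h4 b1 by blast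
    then show False using a1 by simp
  qed
  have ws: "w s = X"
  proof (rule ccontr)
    assume "w s \<noteq> X" then have Y: "w s = Y" by simp
    have b1: "snd (P (s-1)) = snd (P s) - 1" using b_inc[of s] Y by simp
    have a1: "fst (P (s-1)) = u" using a_inc[of s] Y h5 by simp
    have "snd (P (s-1)) \<ge> v" using b_mono[of r "s-1"] rs h2 by simp
    moreover have "snd (P (s-1)) \<noteq> v" using h1 a1 by (metis prod.collapse)
    ultimately have "snd (P (s-1)) > v" by simp
    then have "snd (P s) \<le> snd (P (s-1))" using h7 a1 by blast
    then show False using b1 by simp
  qed
  have s2: "r + 2 \<le> s" using rs wr ws by (cases "s = r + 1") auto
  have ls: "map w [r+1..s] = Y # map w [r+2..s-1] @ [X]"
  proof -
    have "[r+1..s] = (r+1) # [r+1+1..s]" using upto_rec1[of "r+1" s] s2 by simp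
    also have "r+1+1 = r+2" by simp
    finally have 1: "[r+1..s] = (r+1) # [r+2..s]" .
    have 2: "[r+2..s] = [r+2..s-1] @ [s]" using upto_rec2[of "r+2" s] s2 by simp
    show ?thesis unfolding 1 2 using wr ws by simp
  qed
  have "int (T0 w P (u,v)) = det2 (fst (St w s)) (snd (St w r))"
    using T0_int col_eq[of s u] row_eq[of r v] h2 h5 by simp
  also have "\<dots> = det2 (fst (run (map w [r+1..s]) (fst (St w r), snd (St w r)))) (snd (St w r))"
    using St_run[of r s w] rs by simp
  also have "\<dots> = fst (foldr fstep (Y # map w [r+2..s-1] @ [X]) (1,0))"
    unfolding ls run_det using St_det[of w r] by simp
  also have "\<dots> = word_value (map w [r+2..s-1])" by (simp only: al_word word_value_cf)
  finally show ?thesis .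
qed

end

theorem theorem3:
  fixes w :: "int \<Rightarrow> letter" and P :: "int \<Rightarrow> int \<times> int"
  assumes "admissible w" and "embedding w P"
  shows "(\<exists>!t :: int \<times> int \<Rightarrow> nat. sl2_tiling t \<and> (\<forall>i. t (P i) = 1))
    \<and> (\<forall>t :: int \<times> int \<Rightarrow> nat. sl2_tiling t \<and> (\<forall>i. t (P i) = 1) \<longrightarrow>
         (\<forall>u v r s.
            (\<forall>i. P i \<noteq> (u, v))
          \<and> (\<exists>i. fst (P i) = u \<and> snd (P i) > v)
          \<and> snd (P r) = v \<and> fst (P r) < u
          \<and> (\<forall>i. snd (P i) = v \<and> fst (P i) < u \<longrightarrow> fst (P i) \<le> fst (P r))
          \<and> fst (P s) = u \<and> snd (P s) > v
          \<and> (\<forall>i. fst (P i) = u \<and> snd (P i) > v \<longrightarrow> snd (P s) \<le> snd (P i))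
          \<longrightarrow> int (t (u, v)) = word_value (map w [r + 2..s - 1])))"
proof -
  have ex: "sl2_tiling (T0 w P) \<and> (\<forall>i. T0 w P (P i) = 1)"
    using T0_tiling[OF assms] T0_path[OF assms] by blast
  have un: "\<And>t. sl2_tiling t \<Longrightarrow> \<forall>i. t (P i) = 1 \<Longrightarrow> t = T0 w P"
    using uniq[OF assms] ex by blast
  show ?thesis
  proof
    show "\<exists>!t :: int \<times> int \<Rightarrow> nat. sl2_tiling t \<and> (\<forall>i. t (P i) = 1)"
      using ex un by blast
  next
    show "\<forall>t :: int \<times> int \<Rightarrow> nat. sl2_tiling t \<and> (\<forall>i. t (P i) = 1) \<longrightarrow>
         (\<forall>u v r s.
            (\<forall>i. P i \<noteq> (u, v))
          \<and> (\<exists>i. fst (P i) = u \<and> snd (P i) > v)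
          \<and> snd (P r) = v \<and> fst (P r) < u
          \<and> (\<forall>i. snd (P i) = v \<and> fst (P i) < u \<longrightarrow> fst (P i) \<le> fst (P r))
          \<and> fst (P s) = u \<and> snd (P s) > v
          \<and> (\<forall>i. fst (P i) = u \<and> snd (P i) > v \<longrightarrow> snd (P s) \<le> snd (P i))
          \<longrightarrow> int (t (u, v)) = word_value (map w [r + 2..s - 1]))"
    proof (intro allI impI)
      fix t u v r s
      assume ht: "sl2_tiling t \<and> (\<forall>i. t (P i) = 1)"
        and h: "(\<forall>i. P i \<noteq> (u, v))
          \<and> (\<exists>i. fst (P i) = u \<and> snd (P i) > v)
          \<and> snd (P r) = v \<and> fst (P r) < u
          \<and> (\<forall>i. snd (P i) = v \<and> fst (P i) < u \<longrightarrow> fst (P i) \<le> fst (P r))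
          \<and> fst (P s) = u \<and> snd (P s) > v
          \<and> (\<forall>i. fst (P i) = u \<and> snd (P i) > v \<longrightarrow> snd (P s) \<le> snd (P i))"
      have "t = T0 w P" using un ht by blast
      moreover have "int (T0 w P (u, v)) = word_value (map w [r + 2..s - 1])"
        using formula[OF assms, of u v r s] h by blast
      ultimately show "int (t (u, v)) = word_value (map w [r + 2..s - 1])" by simp
    qed
  qed
qed

end
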